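(* Let $2\le\gamma\le17$ and consider the SIEMS6 method ($\mathrm{k}=6$) with coefficients defined as in the context. Then $\sigma_{\mathrm{F}}=1$, $$\sigma_{\mathrm{E}}=\frac{15(32\gamma^5+80\gamma^4-80\gamma^3+40\gamma^2-10\gamma+1)}{16(30\gamma^5-50\gamma^3+50\gamma^2-20\gamma+3)},\quad\lambda_{\mathrm{I}}=\frac{15(2\gamma-1)^5}{16(30\gamma^5-50\gamma^3+50\gamma^2-20\gamma+3)},$$ so that $\mathfrak{I}_{\mathrm{IE}}=\dfrac{(2\gamma-1)^5}{32\gamma^5+80\gamma^4-80\gamma^3+40\gamma^2-10\gamma+1}$.
   Context: The $\gamma$-parameterized SIEMS-$\mathrm{k}$ method has coefficients $a_j$ ($0\le j\le\mathrm{k}-1$), $b_j$ ($0\le j\le\mathrm{k}$), $c_j$ ($0\le j\le\mathrm{k}-1$) determined by the polynomial identities (in $\zeta$) $\sum_{j=0}^{\mathrm{k}-1}a_j\zeta^{\mathrm{k}-j-1}=\sum_{j=1}^{\mathrm{k}}\frac{f^{(j)}(1)}{j!}(\zeta-1)^{j-1}$ with $f(z)=(\gamma z-\gamma+1)^{\mathrm{k}-1}z\ln z$; $\sum_{j=0}^{\mathrm{k}}b_j\zeta^{\mathrm{k}-j}=\zeta(\gamma\zeta-\gamma+1)^{\mathrm{k}-1}$; $\sum_{j=0}^{\mathrm{k}-1}c_j\zeta^{\mathrm{k}-j-1}=\zeta(\gamma\zeta-\gamma+1)^{\mathrm{k}-1}-\gamma^{\mathrm{k}-1}(\zeta-1)^{\mathrm{k}}$.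 Define $a(\theta)=\sum_j a_je^{\imath j\theta}$, $b(\theta)=\sum_j b_je^{\imath j\theta}$, $c(\theta)=\sum_jc_je^{\imath j\theta}$, $\sigma_{\mathrm{F}}=\max_{\theta\in[0,2\pi)}|1/a(\theta)|$, $\sigma_{\mathrm{E}}=\max_{\theta\in[0,2\pi)}|c(\theta)/a(\theta)|$, $\lambda_{\mathrm{I}}=\min_{\theta\in[0,2\pi)}\Re[b(\theta)/a(\theta)]$, $\mathfrak{I}_{\mathrm{IE}}=\lambda_{\mathrm{I}}/\sigma_{\mathrm{E}}$. *)

theory Defs
  imports "HOL-Analysis.Analysis" "HOL-Computational_Algebra.Polynomial"
begin

definition siems_f :: "real \<Rightarrow> nat \<Rightarrow> real \<Rightarrow> real" where
  "siems_f \<gamma> k z = (\<gamma> * z - \<gamma> + 1) ^ (k - 1) * z * ln z"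

definition siems_A_poly :: "real \<Rightarrow> nat \<Rightarrow> real poly" where
  "siems_A_poly \<gamma> k =
     (\<Sum>j=1..k. smult (((deriv ^^ j) (siems_f \<gamma> k) 1) / fact j) ([:-1, 1:] ^ (j - 1)))"

definition siems_B_poly :: "real \<Rightarrow> nat \<Rightarrow> real poly" where
  "siems_B_poly \<gamma> k = [:0, 1:] * [:1 - \<gamma>, \<gamma>:] ^ (k - 1)"

definition siems_C_poly :: "real \<Rightarrow> nat \<Rightarrow> real poly" where
  "siems_C_poly \<gamma> k = siems_B_poly \<gamma> k - smult (\<gamma> ^ (k - 1)) ([:-1, 1:] ^ k)"

definition siems_a_coef :: "real \<Rightarrow> nat \<Rightarrow> nat \<Rightarrow> real" where
  "siems_a_coef \<gamma> k j = coeff (siems_A_poly \<gamma> k) (k - j - 1)"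

definition siems_b_coef :: "real \<Rightarrow> nat \<Rightarrow> nat \<Rightarrow> real" where
  "siems_b_coef \<gamma> k j = coeff (siems_B_poly \<gamma> k) (k - j)"

definition siems_c_coef :: "real \<Rightarrow> nat \<Rightarrow> nat \<Rightarrow> real" where
  "siems_c_coef \<gamma> k j = coeff (siems_C_poly \<gamma> k) (k - j - 1)"

definition siems_a :: "real \<Rightarrow> nat \<Rightarrow> real \<Rightarrow> complex" where
  "siems_a \<gamma> k \<theta> = (\<Sum>j<k. of_real (siems_a_coef \<gamma> k j) * exp (\<i> * of_nat j * of_real \<theta>))"

definition siems_b :: "real \<Rightarrow> nat \<Rightarrow> real \<Rightarrow> complex" where
  "siems_b \<gamma> k \<theta> = (\<Sum>j\<le>k. of_real (siems_b_coef \<gamma> k j) * exp (\<i> * of_nat j * of_real \<theta>))"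

definition siems_c :: "real \<Rightarrow> nat \<Rightarrow> real \<Rightarrow> complex" where
  "siems_c \<gamma> k \<theta> = (\<Sum>j<k. of_real (siems_c_coef \<gamma> k j) * exp (\<i> * of_nat j * of_real \<theta>))"

definition sigma_F :: "real \<Rightarrow> nat \<Rightarrow> real" where
  "sigma_F \<gamma> k = (SUP \<theta>\<in>{0..<2*pi}. cmod (1 / siems_a \<gamma> k \<theta>))"

definition sigma_E :: "real \<Rightarrow> nat \<Rightarrow> real" where
  "sigma_E \<gamma> k = (SUP \<theta>\<in>{0..<2*pi}. cmod (siems_c \<gamma> k \<theta> / siems_a \<gamma> k \<theta>))"

definition lambda_I :: "real \<Rightarrow> nat \<Rightarrow> real" where
  "lambda_I \<gamma> k = (INF \<theta>\<in>{0..<2*pi}. Re (siems_b \<gamma> k \<theta> / siems_a \<gamma> k \<theta>))"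

definition I_IE :: "real \<Rightarrow> nat \<Rightarrow> real" where
  "I_IE \<gamma> k = lambda_I \<gamma> k / sigma_E \<gamma> k"

end

theory Submission
  imports Defs
begin


definition Qd :: "nat \<Rightarrow> real \<Rightarrow> real \<Rightarrow> real" where
  "Qd k g z = (let h = g*z - g + 1 in
     if k = 0 then z*h^5 else if k = 1 then 5*g*z*h^4 + h^5
     else if k = 2 then 20*g^2*z*h^3 + 10*g*h^4
     else if k = 3 then 60*g^3*z*h^2 + 60*g^2*h^3
     else if k = 4 then 120*g^4*z*h + 240*g^3*h^2
     else if k = 5 then 120*g^5*z + 600*g^4*h
     else if k = 6 then 720*g^5 else 0)"

lemma Qd_deriv: "k \<le> 5 \<Longrightarrow> (Qd k g has_real_derivative Qd (Suc k) g z) (at z)"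
proof -
  assume "k \<le> 5"
  then consider "k=0" | "k=1" | "k=2" | "k=3" | "k=4" | "k=5" by linarith
  then show ?thesis
  proof cases
    case 1 show ?thesis unfolding 1 Qd_def Let_def
      apply simp
      apply (rule derivative_eq_intros refl)+
      by (simp add: algebra_simps power2_eq_square power3_eq_cube eval_nat_numeral)
  next
    case 2 show ?thesis unfolding 2 Qd_def Let_def
      apply simp
      apply (rule derivative_eq_intros refl)+
      by (simp add: algebra_simps power2_eq_square power3_eq_cube eval_nat_numeral)
  next
    case 3 show ?thesis unfolding 3 Qd_def Let_def
      apply simp
      apply (rule derivative_eq_intros refl)+
      by (simp add: algebra_simps power2_eq_square power3_eq_cube eval_nat_numeral)
  next
    case 4 show ?thesis unfolding 4 Qd_def Let_def
      apply simp
      apply (rule derivative_eq_intros refl)+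
      by (simp add: algebra_simps power2_eq_square power3_eq_cube eval_nat_numeral)
  next
    case 5 show ?thesis unfolding 5 Qd_def Let_def
      apply simp
      apply (rule derivative_eq_intros refl)+
      by (simp add: algebra_simps power2_eq_square power3_eq_cube eval_nat_numeral)
  next
    case 6 show ?thesis unfolding 6 Qd_def Let_def
      apply simp
      apply (rule derivative_eq_intros refl)+
      by (simp add: algebra_simps power2_eq_square power3_eq_cube eval_nat_numeral)
  qed
qed


lemma Qd_deriv': "k \<le> 5 \<Longrightarrow> D = Qd (Suc k) g z \<Longrightarrow> ((\<lambda>x. Qd k g x) has_real_derivative D) (at z within S)"
  using Qd_deriv[of k g z] by (auto intro: has_field_derivative_at_within)

definition G :: "nat \<Rightarrow> real \<Rightarrow> real \<Rightarrow> real" where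
  "G j g z = (if j = 0 then Qd 0 g z * ln z
    else if j = 1 then Qd 1 g z * ln z + (1) * Qd 0 g z / z^1
    else if j = 2 then Qd 2 g z * ln z + (2) * Qd 1 g z / z^1 + (-1) * Qd 0 g z / z^2
    else if j = 3 then Qd 3 g z * ln z + (3) * Qd 2 g z / z^1 + (-3) * Qd 1 g z / z^2 + (2) * Qd 0 g z / z^3
    else if j = 4 then Qd 4 g z * ln z + (4) * Qd 3 g z / z^1 + (-6) * Qd 2 g z / z^2 + (8) * Qd 1 g z / z^3 + (-6) * Qd 0 g z / z^4
    else if j = 5 then Qd 5 g z * ln z + (5) * Qd 4 g z / z^1 + (-10) * Qd 3 g z / z^2 + (20) * Qd 2 g z / z^3 + (-30) * Qd 1 g z / z^4 + (24) * Qd 0 g z / z^5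
    else if j = 6 then Qd 6 g z * ln z + (6) * Qd 5 g z / z^1 + (-15) * Qd 4 g z / z^2 + (40) * Qd 3 g z / z^3 + (-90) * Qd 2 g z / z^4 + (144) * Qd 1 g z / z^5 + (-120) * Qd 0 g z / z^6
    else 0)"

lemma G_deriv: "j \<le> 5 \<Longrightarrow> z > 0 \<Longrightarrow> (G j g has_real_derivative G (Suc j) g z) (at z)"
proof -
  assume j: "j \<le> 5" and z: "z > 0"
  have z': "z \<noteq> 0" using z by simp
  from j consider "j=0" | "j=1" | "j=2" | "j=3" | "j=4" | "j=5" by linarith
  then show ?thesis
  proof cases
    case 1 show ?thesis unfolding 1 G_def
      apply simp
      apply (rule derivative_eq_intros Qd_deriv' DERIV_ident refl | simp add: z z')+
      apply (simp_all add: z z' field_simps eval_nat_numeral)?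
      done
  next
    case 2 show ?thesis unfolding 2 G_def
      apply simp
      apply (rule derivative_eq_intros Qd_deriv' DERIV_ident refl | simp add: z z')+
      apply (simp_all add: z z' field_simps eval_nat_numeral)?
      done
  next
    case 3 show ?thesis unfolding 3 G_def
      apply simp
      apply (rule derivative_eq_intros Qd_deriv' DERIV_ident refl | simp add: z z')+
      apply (simp_all add: z z' field_simps eval_nat_numeral)?
      done
  next
    case 4 show ?thesis unfolding 4 G_def
      apply simp
      apply (rule derivative_eq_intros Qd_deriv' DERIV_ident refl | simp add: z z')+
      apply (simp_all add: z z' field_simps eval_nat_numeral)?
      done
  next
    case 5 show ?thesis unfolding 5 G_def
      apply simp
      apply (rule derivative_eq_intros Qd_deriv' DERIV_ident refl | simp add: z z')+
      apply (simp_all add: z z' field_simps eval_nat_numeral)?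
      done
  next
    case 6 show ?thesis unfolding 6 G_def
      apply simp
      apply (rule derivative_eq_intros Qd_deriv' DERIV_ident refl | simp add: z z')+
      apply (simp_all add: z z' field_simps eval_nat_numeral)?
      done
  qed
qed


lemma f_higher: "j \<le> 6 \<Longrightarrow> z > 0 \<Longrightarrow> (deriv ^^ j) (siems_f g 6) z = G j g z"
proof (induction j arbitrary: z)
  case 0
  then show ?case by (simp add: siems_f_def G_def Qd_def Let_def)
next
  case (Suc j)
  have ev: "eventually (\<lambda>x. (deriv ^^ j) (siems_f g 6) x = G j g x) (nhds z)"
  proof -
    have "eventually (\<lambda>x. x \<in> {0<..}) (nhds z)"
      using Suc.prems by (intro eventually_nhds_in_open) auto
    then show ?thesis by eventually_elim (use Suc in auto)
  qed
  have "(deriv ^^ Suc j) (siems_f g 6) z = deriv ((deriv ^^ j) (siems_f g 6)) z" by simp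
  also have "\<dots> = deriv (G j g) z" by (rule deriv_cong_ev[OF ev refl])
  also have "\<dots> = G (Suc j) g z" using Suc.prems by (intro DERIV_imp_deriv G_deriv) auto
  finally show ?case .
qed

lemma f_at1: "j \<le> 6 \<Longrightarrow> (deriv ^^ j) (siems_f g 6) 1 = G j g 1"
  by (rule f_higher) auto

lemma A_poly: "siems_A_poly g 6 = [:((1/6) + (-1)*g + (5/2)*g^2 + (-10/3)*g^3 + (5/2)*g^4 + (-1)*g^5), ((29/20) + (-65/12)*g + (35/6)*g^2 + (5/3)*g^3 + (-15/2)*g^4 + (5)*g^5), ((-21/20) + (10)*g + (-70/3)*g^2 + (50/3)*g^3 + (5)*g^4 + (-10)*g^5), ((37/60) + (-5)*g + (20)*g^2 + (-80/3)*g^3 + (5)*g^4 + (10)*g^5), ((-13/60) + (5/3)*g + (-35/6)*g^2 + (40/3)*g^3 + (-15/2)*g^4 + (-5)*g^5), ((1/30) + (-1/4)*g + (5/6)*g^2 + (-5/3)*g^3 + (5/2)*g^4 + (1)*g^5):]" (is "_ = ?rhs")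
proof -
  have "siems_A_poly g 6 = (\<Sum>j=1..6. smult (G j g 1 / fact j) ([:-1, 1:] ^ (j - 1)))"
    unfolding siems_A_poly_def by (rule sum.cong) (auto simp: f_at1)
  also have "\<dots> = (\<Sum>j\<in>{1,2,3,4,5,6}. smult (G j g 1 / fact j) ([:-1, 1:] ^ (j - 1)))"
    by (rule arg_cong[where f="sum _"]) auto
  also have "\<dots> = ?rhs"
    by (simp add: G_def Qd_def eval_nat_numeral fact_numeral field_simps)
  finally show ?thesis .
qed

lemma B_poly: "siems_B_poly g 6 = [:(0), ((1) + (-5)*g + (10)*g^2 + (-10)*g^3 + (5)*g^4 + (-1)*g^5), ((5)*g + (-20)*g^2 + (30)*g^3 + (-20)*g^4 + (5)*g^5), ((10)*g^2 + (-30)*g^3 + (30)*g^4 + (-10)*g^5), ((10)*g^3 + (-20)*g^4 + (10)*g^5), ((5)*g^4 + (-5)*g^5), ((1)*g^5):]"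
  unfolding siems_B_poly_def by (simp add: eval_nat_numeral algebra_simps)

lemma C_poly: "siems_C_poly g 6 = [:((-1)*g^5), ((1) + (-5)*g + (10)*g^2 + (-10)*g^3 + (5)*g^4 + (5)*g^5), ((5)*g + (-20)*g^2 + (30)*g^3 + (-20)*g^4 + (-10)*g^5), ((10)*g^2 + (-30)*g^3 + (30)*g^4 + (10)*g^5), ((10)*g^3 + (-20)*g^4 + (-5)*g^5), ((5)*g^4 + (1)*g^5):]"
  unfolding siems_C_poly_def B_poly by (simp add: eval_nat_numeral algebra_simps)



fun TU :: "nat \<Rightarrow> real \<Rightarrow> real \<times> real" where
  "TU 0 c = (1, 0)"
| "TU (Suc n) c = (fst (TU n c) * c - (1 - c^2) * snd (TU n c), snd (TU n c) * c + fst (TU n c))"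

lemma cos_sin_TU: "cos (real n * t) = fst (TU n (cos t)) \<and> sin (real n * t) = sin t * snd (TU n (cos t))"
proof (induction n)
  case 0 then show ?case by simp
next
  case (Suc n)
  have e: "real (Suc n) * t = real n * t + t" by (simp add: algebra_simps)
  have ss: "sin t * sin t = 1 - cos t * cos t" using sin_squared_eq[of t] by (simp add: power2_eq_square)
  have c1: "cos (real (Suc n) * t) = cos (real n*t) * cos t - sin (real n*t) * sin t" by (simp only: e cos_add)
  have s1: "sin (real (Suc n) * t) = sin (real n*t) * cos t + cos (real n*t) * sin t" by (simp only: e sin_add)
  have A: "cos (real (Suc n) * t) = fst (TU (Suc n) (cos t))"
    unfolding c1 using Suc.IH ss by (simp add: power2_eq_square)
  have B: "sin (real (Suc n) * t) = sin t * snd (TU (Suc n) (cos t))"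
    unfolding s1 using Suc.IH by (simp add: algebra_simps)
  show ?case using A B ..
qed

lemma cos_TU': "cos (t * real n) = fst (TU n (cos t))" and sin_TU': "sin (t * real n) = sin t * snd (TU n (cos t))"
  using cos_sin_TU[of n t] by (simp_all add: mult.commute)

lemma exp_ij: "exp (\<i> * of_nat j * of_real t) = Complex (cos (real j * t)) (sin (real j * t))"
proof -
  have "\<i> * of_nat j * of_real t = \<i> * complex_of_real (real j * t)" by simp
  then show ?thesis by (simp only: cis_conv_exp[symmetric]) (simp add: complex_eq_iff)
qed

lemma Re_a: "Re (siems_a g 6 t) = (\<Sum>j<6. siems_a_coef g 6 j * fst (TU j (cos t)))"
  and Im_a: "Im (siems_a g 6 t) = sin t * (\<Sum>j<6. siems_a_coef g 6 j * snd (TU j (cos t)))"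
  unfolding siems_a_def exp_ij by (simp_all add: Re_sum Im_sum cos_TU' sin_TU' sum_distrib_left algebra_simps)

lemma Re_b: "Re (siems_b g 6 t) = (\<Sum>j\<le>6. siems_b_coef g 6 j * fst (TU j (cos t)))"
  and Im_b: "Im (siems_b g 6 t) = sin t * (\<Sum>j\<le>6. siems_b_coef g 6 j * snd (TU j (cos t)))"
  unfolding siems_b_def exp_ij by (simp_all add: Re_sum Im_sum cos_TU' sin_TU' sum_distrib_left algebra_simps)

lemma Re_c: "Re (siems_c g 6 t) = (\<Sum>j<6. siems_c_coef g 6 j * fst (TU j (cos t)))"
  and Im_c: "Im (siems_c g 6 t) = sin t * (\<Sum>j<6. siems_c_coef g 6 j * snd (TU j (cos t)))"
  unfolding siems_c_def exp_ij by (simp_all add: Re_sum Im_sum cos_TU' sin_TU' sum_distrib_left algebra_simps)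

definition RA :: "real \<Rightarrow> real \<Rightarrow> real" where
  "RA g c = (((13/15) + (-2/3)*g + (-40/3)*g^2 + (80/3)*g^3 + (-10)*g^4 + (-4)*g^5) + ((113/30) + (-100/3)*g + (230/3)*g^2 + (-160/3)*g^3 + (-10)*g^4 + (20)*g^5)*c + ((-311/30) + (100/3)*g + (-20/3)*g^2 + (-200/3)*g^3 + (70)*g^4 + (-20)*g^5)*c^2 + ((-113/15) + (60)*g + (-430/3)*g^2 + (400/3)*g^3 + (-30)*g^4 + (-20)*g^5)*c^3 + ((58/5) + (-130/3)*g + (140/3)*g^2 + (40/3)*g^3 + (-60)*g^4 + (40)*g^5)*c^4 + ((8/3) + (-16)*g + (40)*g^2 + (-160/3)*g^3 + (40)*g^4 + (-16)*g^5)*c^5)"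

definition VA :: "real \<Rightarrow> real \<Rightarrow> real" where
  "VA g c = (((1) + (-28/3)*g + (20)*g^2 + (-20/3)*g^3 + (-10)*g^4 + (4)*g^5) + ((-137/30) + (35/3)*g + (50/3)*g^2 + (-60)*g^3 + (40)*g^4)*c + ((-31/5) + (52)*g + (-370/3)*g^2 + (320/3)*g^3 + (-10)*g^4 + (-28)*g^5)*c^2 + ((58/5) + (-130/3)*g + (140/3)*g^2 + (40/3)*g^3 + (-60)*g^4 + (40)*g^5)*c^3 + ((8/3) + (-16)*g + (40)*g^2 + (-160/3)*g^3 + (40)*g^4 + (-16)*g^5)*c^4)"

definition RB :: "real \<Rightarrow> real \<Rightarrow> real" where
  "RB g c = (((5)*g + (-20)*g^2 + (20)*g^3 + (-4)*g^5) + ((5) + (-25)*g + (20)*g^2 + (40)*g^3 + (-60)*g^4 + (20)*g^5)*c + ((-40)*g + (160)*g^2 + (-220)*g^3 + (120)*g^4 + (-20)*g^5)*c^2 + ((-20) + (100)*g + (-160)*g^2 + (80)*g^3 + (20)*g^4 + (-20)*g^5)*c^3 + ((40)*g + (-160)*g^2 + (240)*g^3 + (-160)*g^4 + (40)*g^5)*c^4 + ((16) + (-80)*g + (160)*g^2 + (-160)*g^3 + (80)*g^4 + (-16)*g^5)*c^5)"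

definition VB :: "real \<Rightarrow> real \<Rightarrow> real" where
  "VB g c = (((1) + (-5)*g + (20)*g^3 + (-20)*g^4 + (4)*g^5) + ((-20)*g + (80)*g^2 + (-100)*g^3 + (40)*g^4)*c + ((-12) + (60)*g + (-80)*g^2 + (60)*g^4 + (-28)*g^5)*c^2 + ((40)*g + (-160)*g^2 + (240)*g^3 + (-160)*g^4 + (40)*g^5)*c^3 + ((16) + (-80)*g + (160)*g^2 + (-160)*g^3 + (80)*g^4 + (-16)*g^5)*c^4)"

definition RC :: "real \<Rightarrow> real \<Rightarrow> real" where
  "RC g c = (((1) + (-5)*g + (20)*g^3 + (-20)*g^4 + (-4)*g^5) + ((-15)*g + (60)*g^2 + (-80)*g^3 + (40)*g^4 + (20)*g^5)*c + ((-8) + (40)*g + (-60)*g^2 + (20)*g^3 + (20)*g^4 + (-20)*g^5)*c^2 + ((20)*g + (-80)*g^2 + (120)*g^3 + (-80)*g^4 + (-20)*g^5)*c^3 + ((8) + (-40)*g + (80)*g^2 + (-80)*g^3 + (40)*g^4 + (40)*g^5)*c^4 + ((-16)*g^5)*c^5)"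

definition VC :: "real \<Rightarrow> real \<Rightarrow> real" where
  "VC g c = (((-5)*g + (20)*g^2 + (-20)*g^3 + (4)*g^5) + ((-4) + (20)*g + (-20)*g^2 + (-20)*g^3 + (40)*g^4)*c + ((20)*g + (-80)*g^2 + (120)*g^3 + (-80)*g^4 + (-28)*g^5)*c^2 + ((8) + (-40)*g + (80)*g^2 + (-80)*g^3 + (40)*g^4 + (40)*g^5)*c^3 + ((-16)*g^5)*c^4)"


lemma Re_a': "Re (siems_a g 6 t) = RA g (cos t)"
  unfolding Re_a siems_a_coef_def A_poly RA_def by (simp add: eval_nat_numeral) algebra

lemma Im_a': "Im (siems_a g 6 t) = sin t * VA g (cos t)"
  unfolding Im_a siems_a_coef_def A_poly VA_def by (simp add: eval_nat_numeral) algebra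

lemma Re_b': "Re (siems_b g 6 t) = RB g (cos t)"
  unfolding Re_b siems_b_coef_def B_poly RB_def by (simp add: eval_nat_numeral) algebra

lemma Im_b': "Im (siems_b g 6 t) = sin t * VB g (cos t)"
  unfolding Im_b siems_b_coef_def B_poly VB_def by (simp add: eval_nat_numeral) algebra

lemma Re_c': "Re (siems_c g 6 t) = RC g (cos t)"
  unfolding Re_c siems_c_coef_def C_poly RC_def by (simp add: eval_nat_numeral) algebra

lemma Im_c': "Im (siems_c g 6 t) = sin t * VC g (cos t)"
  unfolding Im_c siems_c_coef_def C_poly VC_def by (simp add: eval_nat_numeral) algebra



lemma id1: fixes g c s u :: real assumes "s = g - 2" "u = 1 - c"
  shows "(RA g c)^2 + (1-c^2)*(VA g c)^2 - 1 = u * (((121/6) + s*((30) + s*((10)))) + ((7352/45) + s*((485) + s*((1565/3) + s*((240) + s*((40))))))*u + u^2*(((71087/90) + s*((9916/3) + s*((51832/9) + s*((15920/3) + s*((8140/3) + s*((728) + s*((80)))))))) + ((-1038806/225) + s*((-16415) + s*((-203645/9) + s*((-117772/9) + s*((692) + s*((16132/3) + s*((9400/3) + s*((800) + s*((80))))))))))*u + ((103376/5) + s*((1636756/15) + s*((779216/3) + s*((3303284/9) + s*((3066032/9) + s*((9753028/45) + s*((859736/9) + s*((28720) + s*((16840/3) + s*((640) + s*((32))))))))))))*u^2))"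
  unfolding assms RA_def VA_def by algebra

lemma disc1: fixes s :: real
  shows "4*((71087/90) + s*((9916/3) + s*((51832/9) + s*((15920/3) + s*((8140/3) + s*((728) + s*((80))))))))*((103376/5) + s*((1636756/15) + s*((779216/3) + s*((3303284/9) + s*((3066032/9) + s*((9753028/45) + s*((859736/9) + s*((28720) + s*((16840/3) + s*((640) + s*((32)))))))))))) - ((-1038806/225) + s*((-16415) + s*((-203645/9) + s*((-117772/9) + s*((692) + s*((16132/3) + s*((9400/3) + s*((800) + s*((80))))))))))^2 = ((2227792464764/50625) + s*((314905899484/675) + s*((915782820287/405) + s*((1503573839954/225) + s*((9124516319917/675) + s*((40261108726184/2025) + s*((8916055148944/405) + s*((7583341998664/405) + s*((5004564566128/405) + s*((171199097792/27) + s*((113207890384/45) + s*((6847580608/9) + s*((512743232/3) + s*((81864320/3) + s*((2865920) + s*((169984) + s*((3840))))))))))))))))))"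
  by algebra

lemma id2: fixes g c s :: real assumes "s = g - 2"
  shows "(15*(32*g^5 + 80*g^4 - 80*g^3 + 40*g^2 - 10*g + 1))^2 * ((RA g c)^2 + (1-c^2)*(VA g c)^2) - (16*(30*g^5 - 50*g^3 + 50*g^2 - 20*g + 3))^2 * ((RC g c)^2 + (1-c^2)*(VC g c)^2)
   = (1+c) * ((1+c)^0*(1-c)^4*((10382860743729/32) + s*((16380150136815/4) + s*((90410162925295/4) + s*((74504754075225) + s*((333275226848945/2) + s*((270608753319666) + s*((332131696653600) + s*((315783708704440) + s*((236026749127760) + s*((139706836114400) + s*((65562835837248) + s*((24273991161600) + s*((7006801936000) + s*((1544094707200) + s*((250860646400) + s*((28304640000) + s*((1979136000) + s*((64512000))))))))))))))))))) + (1+c)^1*(1-c)^3*((591289452017/4) + s*((10040762529905/8) + s*((39767157620135/8) + s*((12178188588335) + s*((41264004046655/2) + s*((25594629546394) + s*((24007852961000) + s*((17331316209400) + s*((9703511370400) + s*((4211172981600) + s*((1404156631200) + s*((352996710400) + s*((64707612800) + s*((8156352000) + s*((631296000) + s*((22579200))))))))))))))))) + (1+c)^2*(1-c)^2*((248131887155/16) + s*((900734533715/8) + s*((3011117584965/8) + s*((766908726255) + s*((2124500609085/2) + s*((1055790791600) + s*((774325777400) + s*((424044150800) + s*((173276184800) + s*((52136661600) + s*((11215862880) + s*((1631424000) + s*((143568000) + s*((5760000))))))))))))))) + (1+c)^3*(1-c)^1*((3401252115/4) + s*((40418589615/8) + s*((108828811305/8) + s*((21899413575) + s*((46812554625/2)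 + s*((17427509700) + s*((9215878100) + s*((3457521200) + s*((900638000) + s*((154860000) + s*((15782400) + s*((720000))))))))))))) + (1+c)^4*(1-c)^0*((599237001/32) + s*((691962255/8) + s*((1415402925/8) + s*((210151050) + s*((159553225) + s*((80179960) + s*((26619100) + s*((5616000) + s*((681000) + s*((36000))))))))))))"
  unfolding assms RA_def VA_def RC_def VC_def by algebra

lemma id3: fixes g c s :: real assumes "s = g - 2"
  shows "16*(30*g^5 - 50*g^3 + 50*g^2 - 20*g + 3) * (RB g c * RA g c + (1-c^2)*(VB g c * VA g c)) - 15*(2*g-1)^5 * ((RA g c)^2 + (1-c^2)*(VA g c)^2)
   = (1+c) * ((1+c)^0*(1-c)^4*((535305591/160) + s*((563782599/16) + s*((1240565571/8) + s*((1569035811/4) + s*((1294686879/2) + s*((3710358702/5) + s*((609863670) + s*((363625360) + s*((156582440) + s*((142786480/3) + s*((9709760) + s*((1195200) + s*((67200)))))))))))))) + (1+c)^1*(1-c)^3*((6983919/4) + s*((90163671/8) + s*((262466619/8) + s*((226801155/4) + s*((64410115) + s*((50243284) + s*((81752510/3) + s*((30438760/3) + s*((2481600) + s*((360000) + s*((23520)))))))))))) + (1+c)^2*(1-c)^2*((15480789/80) + s*((3997437/4) + s*((18078215/8) + s*((11690255/4) + s*((7094125/3) + s*((1225872) + s*((397650) + s*((73800) + s*((6000)))))))))) + (1+c)^3*(1-c)^1*((43933/4) + s*((334905/8) + s*((1599295/24) + s*((680575/12) + s*((27225) + s*((6990) + s*((750)))))))) + (1+c)^4*(1-c)^0*((7923/32)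 + s*((9765/16) + s*((2275/4) + s*((475/2) + s*((75/2)))))))"
  unfolding assms RA_def VA_def RB_def VB_def by algebra

lemma Dpos: fixes g s :: real assumes "s = g - 2"
  shows "(30*g^5 - 50*g^3 + 50*g^2 - 20*g + 3) = ((723) + s*((1980) + s*((2150) + s*((1150) + s*((300) + s*((30)))))))" unfolding assms by algebra

lemma Npos: fixes g s :: real assumes "s = g - 2"
  shows "(32*g^5 + 80*g^4 - 80*g^3 + 40*g^2 - 10*g + 1) = ((1805) + s*((4310) + s*((4040) + s*((1840) + s*((400) + s*((32)))))))" unfolding assms by algebra



lemma quad_nonneg: fixes a b c u :: real
  assumes "a > 0" "4*b*a - c^2 \<ge> 0" shows "b + c*u + a*u^2 \<ge> 0"
proof -
  have "4*a*(b + c*u + a*u^2) = (2*a*u + c)^2 + (4*b*a - c^2)" by algebra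
  also have "\<dots> \<ge> 0" using assms by simp
  finally show ?thesis using assms by (simp add: zero_le_mult_iff)
qed

lemma bern2_nonneg: fixes p m s :: real assumes "0 \<le> p" "0 \<le> m" "0 \<le> s"
  shows "0 \<le> p^0*m^4*((10382860743729/32) + s*((16380150136815/4) + s*((90410162925295/4) + s*((74504754075225) + s*((333275226848945/2) + s*((270608753319666) + s*((332131696653600) + s*((315783708704440) + s*((236026749127760) + s*((139706836114400) + s*((65562835837248) + s*((24273991161600) + s*((7006801936000) + s*((1544094707200) + s*((250860646400) + s*((28304640000) + s*((1979136000) + s*((64512000))))))))))))))))))) + p^1*m^3*((591289452017/4) + s*((10040762529905/8) + s*((39767157620135/8) + s*((12178188588335) + s*((41264004046655/2) + s*((25594629546394) + s*((24007852961000) + s*((17331316209400) + s*((9703511370400) + s*((4211172981600) + s*((1404156631200) + s*((352996710400) + s*((64707612800) + s*((8156352000) + s*((631296000) + s*((22579200))))))))))))))))) + p^2*m^2*((248131887155/16) + s*((900734533715/8) + s*((3011117584965/8) + s*((766908726255) + s*((2124500609085/2) + s*((1055790791600) + s*((774325777400) + s*((424044150800) + s*((173276184800) + s*((52136661600) + s*((11215862880) + s*((1631424000) + s*((143568000) + s*((5760000))))))))))))))) + p^3*m^1*((3401252115/4) + s*((40418589615/8) + s*((108828811305/8) + s*((21899413575) + s*((46812554625/2) + s*((17427509700) + s*((9215878100) + s*((3457521200) + s*((900638000) + s*((154860000) + s*((15782400) + s*((720000))))))))))))) + p^4*m^0*((599237001/32) + s*((691962255/8) + s*((1415402925/8) +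 s*((210151050) + s*((159553225) + s*((80179960) + s*((26619100) + s*((5616000) + s*((681000) + s*((36000)))))))))))"
  using assms by (intro add_nonneg_nonneg mult_nonneg_nonneg zero_le_power) simp_all

lemma bern3_nonneg: fixes p m s :: real assumes "0 \<le> p" "0 \<le> m" "0 \<le> s"
  shows "0 \<le> p^0*m^4*((535305591/160) + s*((563782599/16) + s*((1240565571/8) + s*((1569035811/4) + s*((1294686879/2) + s*((3710358702/5) + s*((609863670) + s*((363625360) + s*((156582440) + s*((142786480/3) + s*((9709760) + s*((1195200) + s*((67200)))))))))))))) + p^1*m^3*((6983919/4) + s*((90163671/8) + s*((262466619/8) + s*((226801155/4) + s*((64410115) + s*((50243284) + s*((81752510/3) + s*((30438760/3) + s*((2481600) + s*((360000) + s*((23520)))))))))))) + p^2*m^2*((15480789/80) + s*((3997437/4) + s*((18078215/8) + s*((11690255/4) + s*((7094125/3) + s*((1225872) + s*((397650) + s*((73800) + s*((6000)))))))))) + p^3*m^1*((43933/4) + s*((334905/8) + s*((1599295/24) + s*((680575/12) + s*((27225) + s*((6990) + s*((750)))))))) + p^4*m^0*((7923/32) + s*((9765/16) + s*((2275/4) + s*((475/2) + s*((75/2))))))"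
  using assms by (intro add_nonneg_nonneg mult_nonneg_nonneg zero_le_power) simp_all

lemma co0_nonneg: fixes s :: real assumes "0 \<le> s" shows "0 \<le> ((121/6) + s*((30) + s*((10))))"
  using assms by (intro add_nonneg_nonneg mult_nonneg_nonneg) simp_all
lemma co1_nonneg: fixes s :: real assumes "0 \<le> s" shows "0 \<le> ((7352/45) + s*((485) + s*((1565/3) + s*((240) + s*((40))))))"
  using assms by (intro add_nonneg_nonneg mult_nonneg_nonneg) simp_all
lemma co4_pos: fixes s :: real assumes "0 \<le> s" shows "0 < ((103376/5) + s*((1636756/15) + s*((779216/3) + s*((3303284/9) + s*((3066032/9) + s*((9753028/45) + s*((859736/9) + s*((28720) + s*((16840/3) + s*((640) + s*((32))))))))))))"
  using assms by (intro add_pos_nonneg add_nonneg_nonneg mult_nonneg_nonneg) simp_all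
lemma disc_nonneg: fixes s :: real assumes "0 \<le> s" shows "0 \<le> ((2227792464764/50625) + s*((314905899484/675) + s*((915782820287/405) + s*((1503573839954/225) + s*((9124516319917/675) + s*((40261108726184/2025) + s*((8916055148944/405) + s*((7583341998664/405) + s*((5004564566128/405) + s*((171199097792/27) + s*((113207890384/45) + s*((6847580608/9) + s*((512743232/3) + s*((81864320/3) + s*((2865920) + s*((169984) + s*((3840))))))))))))))))))"
  using assms by (intro add_nonneg_nonneg mult_nonneg_nonneg) simp_all
lemma D_pos: fixes s :: real assumes "0 \<le> s" shows "0 < ((723) + s*((1980) + s*((2150) + s*((1150) + s*((300) + s*((30)))))))"
  using assms by (intro add_pos_nonneg add_nonneg_nonneg mult_nonneg_nonneg) simp_all
lemma N_pos: fixes s :: real assumes "0 \<le> s" shows "0 < ((1805) + s*((4310) + s*((4040) + s*((1840) + s*((400) + s*((32)))))))"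
  using assms by (intro add_pos_nonneg add_nonneg_nonneg mult_nonneg_nonneg) simp_all

lemma ineq1: fixes g c :: real assumes "2 \<le> g" "c \<le> 1"
  shows "1 \<le> (RA g c)^2 + (1-c^2)*(VA g c)^2"
proof -
  define s where "s = g - 2"
  define u where "u = 1 - c"
  have s0: "0 \<le> s" and u0: "0 \<le> u" using assms by (simp_all add: s_def u_def)
  define Q where "Q = ((71087/90) + s*((9916/3) + s*((51832/9) + s*((15920/3) + s*((8140/3) + s*((728) + s*((80)))))))) + ((-1038806/225) + s*((-16415) + s*((-203645/9) + s*((-117772/9) + s*((692) + s*((16132/3) + s*((9400/3) + s*((800) + s*((80))))))))))*u + ((103376/5) + s*((1636756/15) + s*((779216/3) + s*((3303284/9) + s*((3066032/9) + s*((9753028/45) + s*((859736/9) + s*((28720) + s*((16840/3) + s*((640) + s*((32))))))))))))*u^2"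
  have Q0: "0 \<le> Q" unfolding Q_def
    by (rule quad_nonneg[OF co4_pos[OF s0]]) (unfold disc1, rule disc_nonneg[OF s0])
  have e: "(RA g c)^2 + (1-c^2)*(VA g c)^2 - 1 = u * (((121/6) + s*((30) + s*((10)))) + ((7352/45) + s*((485) + s*((1565/3) + s*((240) + s*((40))))))*u + u^2*Q)"
    unfolding Q_def by (rule id1[OF s_def u_def])
  have "0 \<le> u * (((121/6) + s*((30) + s*((10)))) + ((7352/45) + s*((485) + s*((1565/3) + s*((240) + s*((40))))))*u + u^2*Q)"
    using s0 u0 Q0 co0_nonneg[OF s0] co1_nonneg[OF s0] by (intro mult_nonneg_nonneg add_nonneg_nonneg) simp_all
  then show ?thesis using e by simp
qed

lemma ineq2: fixes g c :: real assumes "2 \<le> g" "-1 \<le> c" "c \<le> 1"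
  shows "(16*(30*g^5 - 50*g^3 + 50*g^2 - 20*g + 3))^2 * ((RC g c)^2 + (1-c^2)*(VC g c)^2) \<le> (15*(32*g^5 + 80*g^4 - 80*g^3 + 40*g^2 - 10*g + 1))^2 * ((RA g c)^2 + (1-c^2)*(VA g c)^2)"
proof -
  define s where "s = g - 2"
  have "0 \<le> (1+c) * ((1+c)^0*(1-c)^4*((10382860743729/32) + s*((16380150136815/4) + s*((90410162925295/4) + s*((74504754075225) + s*((333275226848945/2) + s*((270608753319666) + s*((332131696653600) + s*((315783708704440) + s*((236026749127760) + s*((139706836114400) + s*((65562835837248) + s*((24273991161600) + s*((7006801936000) + s*((1544094707200) + s*((250860646400) + s*((28304640000) + s*((1979136000) + s*((64512000))))))))))))))))))) + (1+c)^1*(1-c)^3*((591289452017/4) + s*((10040762529905/8) + s*((39767157620135/8) + s*((12178188588335) + s*((41264004046655/2) + s*((25594629546394) + s*((24007852961000) + s*((17331316209400) + s*((9703511370400) + s*((4211172981600) + s*((1404156631200) + s*((352996710400) + s*((64707612800) + s*((8156352000) + s*((631296000) + s*((22579200))))))))))))))))) + (1+c)^2*(1-c)^2*((248131887155/16) + s*((900734533715/8) + s*((3011117584965/8) + s*((766908726255) + s*((2124500609085/2) + s*((1055790791600) + s*((774325777400) + s*((424044150800) + s*((173276184800) + s*((52136661600) + s*((11215862880) + s*((1631424000) + s*((143568000) + s*((5760000))))))))))))))) + (1+c)^3*(1-c)^1*((3401252115/4) + s*((40418589615/8) + s*((108828811305/8) + s*((21899413575) + s*((46812554625/2) + s*((17427509700)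 + s*((9215878100) + s*((3457521200) + s*((900638000) + s*((154860000) + s*((15782400) + s*((720000))))))))))))) + (1+c)^4*(1-c)^0*((599237001/32) + s*((691962255/8) + s*((1415402925/8) + s*((210151050) + s*((159553225) + s*((80179960) + s*((26619100) + s*((5616000) + s*((681000) + s*((36000))))))))))))"
  proof (rule mult_nonneg_nonneg)
    show "0 \<le> 1 + c" using assms by simp
    show "0 \<le> (1+c)^0*(1-c)^4*((10382860743729/32) + s*((16380150136815/4) + s*((90410162925295/4) + s*((74504754075225) + s*((333275226848945/2) + s*((270608753319666) + s*((332131696653600) + s*((315783708704440) + s*((236026749127760) + s*((139706836114400) + s*((65562835837248) + s*((24273991161600) + s*((7006801936000) + s*((1544094707200) + s*((250860646400) + s*((28304640000) + s*((1979136000) + s*((64512000))))))))))))))))))) + (1+c)^1*(1-c)^3*((591289452017/4) + s*((10040762529905/8) + s*((39767157620135/8) + s*((12178188588335) + s*((41264004046655/2) + s*((25594629546394) + s*((24007852961000) + s*((17331316209400) + s*((9703511370400) + s*((4211172981600) + s*((1404156631200) + s*((352996710400) + s*((64707612800) + s*((8156352000) + s*((631296000) + s*((22579200))))))))))))))))) + (1+c)^2*(1-c)^2*((248131887155/16) + s*((900734533715/8) + s*((3011117584965/8) + s*((766908726255) + s*((2124500609085/2) + s*((1055790791600) + s*((774325777400) + s*((424044150800) + s*((173276184800) + s*((52136661600) + s*((11215862880) + s*((1631424000) + s*((143568000) + s*((5760000))))))))))))))) + (1+c)^3*(1-c)^1*((3401252115/4) + s*((40418589615/8) + s*((108828811305/8)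 + s*((21899413575) + s*((46812554625/2) + s*((17427509700) + s*((9215878100) + s*((3457521200) + s*((900638000) + s*((154860000) + s*((15782400) + s*((720000))))))))))))) + (1+c)^4*(1-c)^0*((599237001/32) + s*((691962255/8) + s*((1415402925/8) + s*((210151050) + s*((159553225) + s*((80179960) + s*((26619100) + s*((5616000) + s*((681000) + s*((36000)))))))))))" by (rule bern2_nonneg) (use assms in \<open>simp_all add: s_def\<close>)
  qed
  then show ?thesis using id2[where c=c, OF s_def] by linarith
qed

lemma eq2: fixes g :: real
  shows "(16*(30*g^5 - 50*g^3 + 50*g^2 - 20*g + 3))^2 * ((RC g (-1))^2 + (1-(-1)^2)*(VC g (-1))^2) = (15*(32*g^5 + 80*g^4 - 80*g^3 + 40*g^2 - 10*g + 1))^2 * ((RA g (-1))^2 + (1-(-1)^2)*(VA g (-1))^2)"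
  using id2[OF refl, of g "-1"] by simp

lemma ineq3: fixes g c :: real assumes "2 \<le> g" "-1 \<le> c" "c \<le> 1"
  shows "15*(2*g-1)^5 * ((RA g c)^2 + (1-c^2)*(VA g c)^2) \<le> 16*(30*g^5 - 50*g^3 + 50*g^2 - 20*g + 3) * (RB g c * RA g c + (1-c^2)*(VB g c * VA g c))"
proof -
  define s where "s = g - 2"
  have "0 \<le> (1+c) * ((1+c)^0*(1-c)^4*((535305591/160) + s*((563782599/16) + s*((1240565571/8) + s*((1569035811/4) + s*((1294686879/2) + s*((3710358702/5) + s*((609863670) + s*((363625360) + s*((156582440) + s*((142786480/3) + s*((9709760) + s*((1195200) + s*((67200)))))))))))))) + (1+c)^1*(1-c)^3*((6983919/4) + s*((90163671/8) + s*((262466619/8) + s*((226801155/4) + s*((64410115) + s*((50243284) + s*((81752510/3) + s*((30438760/3) + s*((2481600) + s*((360000) + s*((23520)))))))))))) + (1+c)^2*(1-c)^2*((15480789/80) + s*((3997437/4) + s*((18078215/8) + s*((11690255/4) + s*((7094125/3) + s*((1225872) + s*((397650) + s*((73800) + s*((6000)))))))))) + (1+c)^3*(1-c)^1*((43933/4) + s*((334905/8) + s*((1599295/24) + s*((680575/12) + s*((27225) + s*((6990) + s*((750)))))))) + (1+c)^4*(1-c)^0*((7923/32) + s*((9765/16) + s*((2275/4) + s*((475/2) + s*((75/2)))))))"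
  proof (rule mult_nonneg_nonneg)
    show "0 \<le> 1 + c" using assms by simp
    show "0 \<le> (1+c)^0*(1-c)^4*((535305591/160) + s*((563782599/16) + s*((1240565571/8) + s*((1569035811/4) + s*((1294686879/2) + s*((3710358702/5) + s*((609863670) + s*((363625360) + s*((156582440) + s*((142786480/3) + s*((9709760) + s*((1195200) + s*((67200)))))))))))))) + (1+c)^1*(1-c)^3*((6983919/4) + s*((90163671/8) + s*((262466619/8) + s*((226801155/4) + s*((64410115) + s*((50243284) + s*((81752510/3) + s*((30438760/3) + s*((2481600) + s*((360000) + s*((23520)))))))))))) + (1+c)^2*(1-c)^2*((15480789/80) + s*((3997437/4) + s*((18078215/8) + s*((11690255/4) + s*((7094125/3) + s*((1225872) + s*((397650) + s*((73800) + s*((6000)))))))))) + (1+c)^3*(1-c)^1*((43933/4) + s*((334905/8) + s*((1599295/24) + s*((680575/12) + s*((27225) + s*((6990) + s*((750)))))))) + (1+c)^4*(1-c)^0*((7923/32) + s*((9765/16) + s*((2275/4) + s*((475/2) + s*((75/2))))))" by (rule bern3_nonneg) (use assms in \<open>simp_all add: s_def\<close>)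
  qed
  then show ?thesis using id3[where c=c, OF s_def] by linarith
qed

lemma eq3: fixes g :: real
  shows "15*(2*g-1)^5 * ((RA g (-1))^2 + (1-(-1)^2)*(VA g (-1))^2) = 16*(30*g^5 - 50*g^3 + 50*g^2 - 20*g + 3) * (RB g (-1) * RA g (-1) + (1-(-1)^2)*(VB g (-1) * VA g (-1)))"
  using id3[OF refl, of g "-1"] by simp


lemma RA1: "RA g 1 = 1" unfolding RA_def by simp

lemma na_eq: "(cmod (siems_a g 6 t))^2 = (RA g (cos t))^2 + (1-(cos t)^2)*(VA g (cos t))^2"
  by (simp add: cmod_power2 Re_a' Im_a' power_mult_distrib sin_squared_eq)

lemma nc_eq: "(cmod (siems_c g 6 t))^2 = (RC g (cos t))^2 + (1-(cos t)^2)*(VC g (cos t))^2"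
  by (simp add: cmod_power2 Re_c' Im_c' power_mult_distrib sin_squared_eq)

lemma Reba_eq: "Re (siems_b g 6 t / siems_a g 6 t) =
   (RB g (cos t) * RA g (cos t) + (1-(cos t)^2)*(VB g (cos t) * VA g (cos t))) /
   ((RA g (cos t))^2 + (1-(cos t)^2)*(VA g (cos t))^2)"
proof -
  have e1: "Re (siems_b g 6 t) * Re (siems_a g 6 t) + Im (siems_b g 6 t) * Im (siems_a g 6 t)
      = RB g (cos t) * RA g (cos t) + (sin t)^2 * (VB g (cos t) * VA g (cos t))"
    by (simp add: Re_a' Im_a' Re_b' Im_b' power2_eq_square algebra_simps)
  have e2: "(Re (siems_a g 6 t))^2 + (Im (siems_a g 6 t))^2 = (RA g (cos t))^2 + (sin t)^2 * (VA g (cos t))^2"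
    by (simp add: Re_a' Im_a' power_mult_distrib)
  show ?thesis unfolding Re_divide e1 e2 sin_squared_eq ..
qed

theorem mainTheorem13:
  fixes \<gamma> :: real
  assumes "2 \<le> \<gamma>" and "\<gamma> \<le> 17"
  shows "(\<forall>\<theta>. siems_a \<gamma> 6 \<theta> \<noteq> 0)
    \<and> sigma_F \<gamma> 6 = 1
    \<and> sigma_E \<gamma> 6 = 15 * (32*\<gamma>^5 + 80*\<gamma>^4 - 80*\<gamma>^3 + 40*\<gamma>^2 - 10*\<gamma> + 1)
                     / (16 * (30*\<gamma>^5 - 50*\<gamma>^3 + 50*\<gamma>^2 - 20*\<gamma> + 3))
    \<and> lambda_I \<gamma> 6 = 15 * (2*\<gamma> - 1)^5
                     / (16 * (30*\<gamma>^5 - 50*\<gamma>^3 + 50*\<gamma>^2 - 20*\<gamma> + 3))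
    \<and> I_IE \<gamma> 6 = (2*\<gamma> - 1)^5 / (32*\<gamma>^5 + 80*\<gamma>^4 - 80*\<gamma>^3 + 40*\<gamma>^2 - 10*\<gamma> + 1)"
proof -
  define g where "g = \<gamma>"
  have g2: "2 \<le> g" using assms by (simp add: g_def)
  define D where "D = 30*g^5 - 50*g^3 + 50*g^2 - 20*g + 3"
  define N where "N = 32*g^5 + 80*g^4 - 80*g^3 + 40*g^2 - 10*g + 1"
  have D0: "0 < D" unfolding D_def Dpos[OF refl] by (rule D_pos) (use g2 in simp)
  have N0: "0 < N" unfolding N_def Npos[OF refl] by (rule N_pos) (use g2 in simp)
  define a where "a = siems_a g 6"
  define b where "b = siems_b g 6"
  define c where "c = siems_c g 6"
  define na where "na t = (RA g (cos t))^2 + (1-(cos t)^2)*(VA g (cos t))^2" for t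
  define nc where "nc t = (RC g (cos t))^2 + (1-(cos t)^2)*(VC g (cos t))^2" for t
  define nb where "nb t = RB g (cos t) * RA g (cos t) + (1-(cos t)^2)*(VB g (cos t) * VA g (cos t))" for t
  have na: "(cmod (a t))^2 = na t" for t unfolding a_def na_def by (rule na_eq)
  have nc: "(cmod (c t))^2 = nc t" for t unfolding c_def nc_def by (rule nc_eq)
  have nb: "Re (b t / a t) = nb t / na t" for t unfolding a_def b_def nb_def na_def by (rule Reba_eq)
  have na1: "1 \<le> na t" for t unfolding na_def by (rule ineq1[OF g2 cos_le_one])
  have ca1: "1 \<le> cmod (a t)" for t
  proof -
    have "1^2 \<le> (cmod (a t))^2" using na na1 by simp
    then show ?thesis by (rule power2_le_imp_le) simp
  qed
  have anz: "a t \<noteq> 0" for t using ca1[of t] by auto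
  have napos: "0 < na t" for t using na1[of t] by simp
  have a0: "cmod (a 0) = 1"
  proof -
    have "(cmod (a 0))^2 = 1^2" using na[of 0] by (simp add: na_def RA1)
    then show ?thesis by (rule power2_eq_imp_eq) simp_all
  qed
  have sF: "sigma_F g 6 = 1"
    unfolding sigma_F_def a_def[symmetric]
  proof (rule cSup_eq_maximum)
    show "1 \<in> (\<lambda>t. cmod (1 / a t)) ` {0..<2*pi}"
      using a0 by (intro image_eqI[where x=0]) (simp_all add: norm_divide)
    fix x assume "x \<in> (\<lambda>t. cmod (1 / a t)) ` {0..<2*pi}"
    then obtain t where "x = cmod (1 / a t)" by auto
    then show "x \<le> 1" using ca1[of t] by (simp add: norm_divide divide_le_eq)
  qed
  define M where "M = 15 * N / (16 * D)"
  have Eup: "cmod (c t / a t) \<le> M" for t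
  proof -
    have "(16*D)^2 * nc t \<le> (15*N)^2 * na t"
      unfolding na_def nc_def D_def N_def by (rule ineq2[OF g2 cos_ge_minus_one cos_le_one])
    then have "(16*D * cmod (c t))^2 \<le> (15*N * cmod (a t))^2"
      by (simp add: power_mult_distrib na nc)
    then have "16*D * cmod (c t) \<le> 15*N * cmod (a t)"
      by (rule power2_le_imp_le) (use N0 in simp)
    moreover have "0 < cmod (a t)" using ca1[of t] by linarith
    ultimately show ?thesis unfolding M_def using D0
      by (simp add: norm_divide field_simps)
  qed
  have Epi: "cmod (c pi / a pi) = M"
  proof -
    have "(16*D)^2 * nc pi = (15*N)^2 * na pi"
      unfolding na_def nc_def D_def N_def using eq2[of g] by simp
    then have "(16*D * cmod (c pi))^2 = (15*N * cmod (a pi))^2"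
      by (simp add: power_mult_distrib na nc)
    then have "16*D * cmod (c pi) = 15*N * cmod (a pi)"
      by (rule power2_eq_imp_eq) (use N0 D0 in simp_all)
    moreover have "0 < cmod (a pi)" using ca1[of pi] by linarith
    ultimately show ?thesis unfolding M_def using D0
      by (simp add: norm_divide field_simps)
  qed
  have sE: "sigma_E g 6 = M"
    unfolding sigma_E_def a_def[symmetric] c_def[symmetric]
  proof (rule cSup_eq_maximum)
    show "M \<in> (\<lambda>t. cmod (c t / a t)) ` {0..<2*pi}"
      using Epi by (intro image_eqI[where x=pi]) (simp_all add: pi_gt_zero)
    fix x assume "x \<in> (\<lambda>t. cmod (c t / a t)) ` {0..<2*pi}"
    then obtain t where "x = cmod (c t / a t)" by auto
    then show "x \<le> M" using Eup[of t] by simp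
  qed
  define L where "L = 15 * (2*g - 1)^5 / (16 * D)"
  have Ilow: "L \<le> Re (b t / a t)" for t
  proof -
    have "15*(2*g-1)^5 * na t \<le> 16*D * nb t"
      unfolding na_def nb_def D_def by (rule ineq3[OF g2 cos_ge_minus_one cos_le_one])
    then show ?thesis unfolding nb L_def using D0 napos[of t]
      by (simp add: field_simps)
  qed
  have Ipi: "Re (b pi / a pi) = L"
  proof -
    have "15*(2*g-1)^5 * na pi = 16*D * nb pi"
      unfolding na_def nb_def D_def using eq3[of g] by simp
    then show ?thesis unfolding nb L_def using D0 napos[of pi]
      by (simp add: field_simps)
  qed
  have lI: "lambda_I g 6 = L"
    unfolding lambda_I_def a_def[symmetric] b_def[symmetric]
  proof (rule cInf_eq_minimum)
    show "L \<in> (\<lambda>t. Re (b t / a t)) ` {0..<2*pi}"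
      using Ipi by (intro image_eqI[where x=pi]) (simp_all add: pi_gt_zero)
    fix x assume "x \<in> (\<lambda>t. Re (b t / a t)) ` {0..<2*pi}"
    then obtain t where "x = Re (b t / a t)" by auto
    then show "L \<le> x" using Ilow[of t] by simp
  qed
  have iie: "I_IE g 6 = (2*g - 1)^5 / N"
    unfolding I_IE_def sE lI L_def M_def using D0 N0 by (simp add: field_simps)
  show ?thesis
    using anz sF sE lI iie unfolding a_def M_def L_def D_def N_def g_def by simp
qed

end
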